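(* There exists a residually finite monoid $M$ whose (right) action on its set of $\mathcal{L}$-classes is not residually finite.
   Context: A monoid is residually finite if distinct elements are separated by homomorphisms to finite monoids. $x\mathcal{L}y$ iff $Mx=My$; $M$ acts on $M/\mathcal{L}$ by $L_x\cdot m=L_{xm}$. A right action of $M$ on a set $X$ is residually finite if for any distinct $x,y\in X$ there exist an action of $M$ on a finite set $Y$ and an action homomorphism $f:X\to Y$ with $f(x)\neq f(y)$. *)

theory Defs
  imports "HOL-Algebra.Group"
begin

text \<open>Every finite monoid is isomorphic to one whose carrier is a
  set of naturals, so the target monoids are taken of type nat monoid.\<close>
definition residually_finite_monoid :: "('a, 'b) monoid_scheme \<Rightarrow> bool" where
  "residually_finite_monoid M \<longleftrightarrow>
     (\<forall>x\<in>carrier M. \<forall>y\<in>carrier M. x \<noteq> y \<longrightarrow>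
        (\<exists>(N :: nat monoid) f. monoid N \<and> finite (carrier N) \<and> f \<in> hom M N \<and> f x \<noteq> f y))"

definition right_action :: "('a, 'b) monoid_scheme \<Rightarrow> 'x set \<Rightarrow> ('x \<Rightarrow> 'a \<Rightarrow> 'x) \<Rightarrow> bool" where
  "right_action M X act \<longleftrightarrow>
     (\<forall>x\<in>X. \<forall>m\<in>carrier M. act x m \<in> X) \<and>
     (\<forall>x\<in>X. act x \<one>\<^bsub>M\<^esub> = x) \<and>
     (\<forall>x\<in>X. \<forall>m\<in>carrier M. \<forall>n\<in>carrier M. act x (m \<otimes>\<^bsub>M\<^esub> n) = act (act x m) n)"

definition action_hom ::
  "('a, 'b) monoid_scheme \<Rightarrow> 'x set \<Rightarrow> ('x \<Rightarrow> 'a \<Rightarrow> 'x) \<Rightarrow> 'y set \<Rightarrow> ('y \<Rightarrow> 'a \<Rightarrow> 'y) \<Rightarrow> ('x \<Rightarrow> 'y) \<Rightarrow> bool" where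
  "action_hom M X a Y b f \<longleftrightarrow>
     (\<forall>x\<in>X. f x \<in> Y) \<and> (\<forall>x\<in>X. \<forall>m\<in>carrier M. f (a x m) = b (f x) m)"

text \<open>Residually finite action; finite M-sets are taken with underlying set of naturals
  (every finite M-set is isomorphic to such).\<close>
definition residually_finite_action :: "('a, 'b) monoid_scheme \<Rightarrow> 'x set \<Rightarrow> ('x \<Rightarrow> 'a \<Rightarrow> 'x) \<Rightarrow> bool" where
  "residually_finite_action M X a \<longleftrightarrow>
     (\<forall>x\<in>X. \<forall>y\<in>X. x \<noteq> y \<longrightarrow>
        (\<exists>(Y :: nat set) b f. finite Y \<and> right_action M Y b \<and> action_hom M X a Y b f \<and> f x \<noteq> f y))"

definition Lclass :: "('a, 'b) monoid_scheme \<Rightarrow> 'a \<Rightarrow> 'a set" where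
  "Lclass M x = {y \<in> carrier M. (\<lambda>m. m \<otimes>\<^bsub>M\<^esub> x) ` carrier M = (\<lambda>m. m \<otimes>\<^bsub>M\<^esub> y) ` carrier M}"

definition Lclasses :: "('a, 'b) monoid_scheme \<Rightarrow> 'a set set" where
  "Lclasses M = Lclass M ` carrier M"

definition Lact :: "('a, 'b) monoid_scheme \<Rightarrow> 'a set \<Rightarrow> 'a \<Rightarrow> 'a set" where
  "Lact M L m = Lclass M ((SOME x. x \<in> L) \<otimes>\<^bsub>M\<^esub> m)"

end

theory Submission imports Defs "HOL-Library.Countable" begin

datatype elt = One | A int | G int | P int | Zero

instance elt :: countable by countable_datatype

fun mul :: "int \<Rightarrow> elt \<Rightarrow> elt \<Rightarrow> elt" where
  "mul m One e = e"
| "mul m (A r) One = A r"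
| "mul m (A r) (A s) = A ((r + s) mod m)"
| "mul m (A r) (G s) = G ((r + s) mod m)"
| "mul m (A r) (P z) = P ((r + z) mod m)"
| "mul m (A r) Zero = Zero"
| "mul m (G r) One = G r"
| "mul m (G r) (A s) = G r"
| "mul m (G r) (G s) = G r"
| "mul m (G r) (P z) = P ((r + 1) mod m)"
| "mul m (G r) Zero = Zero"
| "mul m (P z) One = P z"
| "mul m (P z) (A s) = Zero"
| "mul m (P z) (G s) = Zero"
| "mul m (P z) (P w) = Zero"
| "mul m (P z) Zero = Zero"
| "mul m Zero e = Zero"

lemma mul_assoc: "mul m (mul m x y) z = mul m x (mul m y z)"
  by (cases x; cases y; cases z) (simp_all add: mod_simps ac_simps)

lemma mul_one_right[simp]: "mul m x One = x"
  by (cases x) auto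

definition okA :: "int \<Rightarrow> int \<Rightarrow> bool" where
  "okA m r = (if m = 0 then 1 \<le> r else 0 \<le> r \<and> r < m)"
definition okG :: "int \<Rightarrow> int \<Rightarrow> bool" where
  "okG m r = (if m = 0 then 0 \<le> r else 0 \<le> r \<and> r < m)"
definition okP :: "int \<Rightarrow> int \<Rightarrow> bool" where
  "okP m r = (m = 0 \<or> (0 \<le> r \<and> r < m))"

fun okE :: "int \<Rightarrow> elt \<Rightarrow> bool" where
  "okE m One = True" | "okE m (A r) = okA m r" | "okE m (G r) = okG m r"
| "okE m (P z) = okP m z" | "okE m Zero = True"

lemma mul_closed: "m \<ge> 0 \<Longrightarrow> okE m x \<Longrightarrow> okE m y \<Longrightarrow> okE m (mul m x y)"
  by (cases x; cases y) (auto simp: okA_def okG_def okP_def)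

definition Mel :: "int \<Rightarrow> elt monoid" where
  "Mel m = \<lparr>carrier = {e. okE m e}, mult = mul m, one = One\<rparr>"

lemma monoid_Mel: "m \<ge> 0 \<Longrightarrow> monoid (Mel m)"
  unfolding Mel_def by (rule monoidI) (auto simp: mul_closed mul_assoc)

lemma finite_Mel: "m > 0 \<Longrightarrow> finite (carrier (Mel m))"
proof -
  assume m: "m > 0"
  have "{e. okE m e} \<subseteq> {One, Zero} \<union> A ` {0..<m} \<union> G ` {0..<m} \<union> P ` {0..<m}"
  proof
    fix e assume "e \<in> {e. okE m e}" then show "e \<in> {One, Zero} \<union> A ` {0..<m} \<union> G ` {0..<m} \<union> P ` {0..<m}"
      using m by (cases e) (auto simp: okA_def okG_def okP_def)
  qed
  then show ?thesis unfolding Mel_def by (auto intro: finite_subset)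
qed

fun red :: "int \<Rightarrow> elt \<Rightarrow> elt" where
  "red m One = One" | "red m (A r) = A (r mod m)" | "red m (G r) = G (r mod m)"
| "red m (P z) = P (z mod m)" | "red m Zero = Zero"

lemma red_mul: "red m (mul 0 x y) = mul m (red m x) (red m y)"
  by (cases x; cases y) (simp_all add: mod_simps ac_simps)

lemma red_hom: "m > 0 \<Longrightarrow> red m \<in> hom (Mel 0) (Mel m)"
  unfolding hom_def Mel_def
  apply (auto simp: red_mul)
  subgoal for x by (cases x) (auto simp: okA_def okG_def okP_def)
  done

fun idx :: "elt \<Rightarrow> int" where
  "idx One = 0" | "idx (A r) = r" | "idx (G r) = r" | "idx (P z) = z" | "idx Zero = 0"

lemma mod_inj: "(r::int) mod m = s mod m \<Longrightarrow> \<bar>r - s\<bar> < m \<Longrightarrow> r = s"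
proof -
  assume h: "r mod m = s mod m" "\<bar>r - s\<bar> < m"
  then have "m dvd (r - s)" by (simp add: mod_eq_dvd_iff)
  then obtain k where k: "r - s = m * k" by auto
  have "m > 0" using h(2) by linarith
  show "r = s"
  proof (rule ccontr)
    assume "r \<noteq> s" then have "k \<noteq> 0" using k by auto
    then have "\<bar>m * k\<bar> \<ge> m" using \<open>m > 0\<close> by (simp add: abs_mult)
    then show False using h(2) k by simp
  qed
qed

lemma red_sep: "x \<noteq> y \<Longrightarrow> red (\<bar>idx x - idx y\<bar> + 1) x \<noteq> red (\<bar>idx x - idx y\<bar> + 1) y"
  by (cases x; cases y) (auto dest: mod_inj)


definition tr :: "elt monoid \<Rightarrow> nat monoid" where
  "tr M = \<lparr>carrier = to_nat ` carrier M, mult = (\<lambda>u v. to_nat (from_nat u \<otimes>\<^bsub>M\<^esub> from_nat v)), one = to_nat \<one>\<^bsub>M\<^esub>\<rparr>"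

lemma tr_simps[simp]: "carrier (tr M) = to_nat ` carrier M"
  "to_nat a \<otimes>\<^bsub>tr M\<^esub> to_nat b = to_nat (a \<otimes>\<^bsub>M\<^esub> b)" "\<one>\<^bsub>tr M\<^esub> = to_nat \<one>\<^bsub>M\<^esub>"
  by (auto simp: tr_def)

lemma monoid_tr: "monoid M \<Longrightarrow> monoid (tr M)"
  by (rule monoidI) (auto simp: monoid.m_assoc intro!: imageI monoid.m_closed)

lemma hom_tr: "h \<in> hom M N \<Longrightarrow> (\<lambda>u. to_nat (h (from_nat u))) \<in> hom (tr M) (tr N)"
  unfolding hom_def by auto

lemma rf_main: "residually_finite_monoid (tr (Mel 0))"
  unfolding residually_finite_monoid_def
proof (intro ballI impI)
  fix u v assume u: "u \<in> carrier (tr (Mel 0))" and v: "v \<in> carrier (tr (Mel 0))" and uv: "u \<noteq> v"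
  from u obtain x :: elt where x: "u = to_nat x" unfolding tr_simps by blast
  from v obtain y :: elt where y: "v = to_nat y" unfolding tr_simps by blast
  have xy: "x \<noteq> y" using uv x y by auto
  define m where "m = \<bar>idx x - idx y\<bar> + 1"
  have m: "m > 0" unfolding m_def by simp
  let ?f = "\<lambda>u. to_nat (red m (from_nat u))"
  have "monoid (tr (Mel m))" using m by (intro monoid_tr monoid_Mel) simp
  moreover have "finite (carrier (tr (Mel m)))" using finite_Mel[OF m] by simp
  moreover have "?f \<in> hom (tr (Mel 0)) (tr (Mel m))" by (rule hom_tr[OF red_hom[OF m]])
  moreover have "?f u \<noteq> ?f v" using red_sep[OF xy] x y m_def by simp
  ultimately show "\<exists>(N :: nat monoid) f. monoid N \<and> finite (carrier N) \<and> f \<in> hom (tr (Mel 0)) N \<and> f u \<noteq> f v"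
    by blast
qed

definition Mimg :: "('a, 'b) monoid_scheme \<Rightarrow> 'a \<Rightarrow> 'a set" where
  "Mimg M z = (\<lambda>m. m \<otimes>\<^bsub>M\<^esub> z) ` carrier M"

lemma Lclass_Mimg: "Lclass M z = {y \<in> carrier M. Mimg M z = Mimg M y}"
  by (simp add: Lclass_def Mimg_def)

lemma Lclass_eqI: "Mimg M p = Mimg M q \<Longrightarrow> Lclass M p = Lclass M q"
  by (simp add: Lclass_Mimg)

lemma Lclass_eqD: "monoid M \<Longrightarrow> p \<in> carrier M \<Longrightarrow> Lclass M p = Lclass M q \<Longrightarrow> Mimg M p = Mimg M q"
  by (metis (mono_tags, lifting) Lclass_Mimg mem_Collect_eq)

lemma Mimg_mult: "monoid M \<Longrightarrow> w \<in> carrier M \<Longrightarrow> m \<in> carrier M \<Longrightarrow>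
    Mimg M (w \<otimes>\<^bsub>M\<^esub> m) = (\<lambda>u. u \<otimes>\<^bsub>M\<^esub> m) ` Mimg M w"
  unfolding Mimg_def image_image by (rule image_cong) (auto simp: monoid.m_assoc)

lemma Lact_Lclass: assumes "monoid M" "z \<in> carrier M" "m \<in> carrier M"
  shows "Lact M (Lclass M z) m = Lclass M (z \<otimes>\<^bsub>M\<^esub> m)"
proof -
  have "z \<in> Lclass M z" using assms by (simp add: Lclass_Mimg)
  define w where "w = (SOME x. x \<in> Lclass M z)"
  have "w \<in> Lclass M z" unfolding w_def using \<open>z \<in> Lclass M z\<close> by (rule someI)
  then have w: "w \<in> carrier M" "Mimg M z = Mimg M w" by (simp_all add: Lclass_Mimg)
  have "Mimg M (w \<otimes>\<^bsub>M\<^esub> m) = Mimg M (z \<otimes>\<^bsub>M\<^esub> m)"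
    using w assms by (simp add: Mimg_mult)
  then show ?thesis unfolding Lact_def w_def[symmetric] by (rule Lclass_eqI)
qed

lemma Mimg_sub: "monoid M \<Longrightarrow> p \<in> Mimg M q \<Longrightarrow> q \<in> carrier M \<Longrightarrow> Mimg M p \<subseteq> Mimg M q"
  unfolding Mimg_def by (auto simp: monoid.m_assoc[symmetric] monoid.m_closed)

lemma Mimg_self: "monoid M \<Longrightarrow> q \<in> carrier M \<Longrightarrow> q \<in> Mimg M q"
  unfolding Mimg_def by (rule image_eqI[of _ _ "\<one>\<^bsub>M\<^esub>"]) (auto simp: monoid.l_one)


abbreviation MM :: "nat monoid" where "MM \<equiv> tr (Mel 0)"

lemma MM_monoid: "monoid MM" by (intro monoid_tr monoid_Mel) simp

lemma MM_carrier: "okE 0 e \<Longrightarrow> to_nat e \<in> carrier MM"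
  by (simp add: Mel_def)

lemma MM_mult: "to_nat e \<otimes>\<^bsub>MM\<^esub> to_nat e' = to_nat (mul 0 e e')"
  by (simp add: Mel_def)

lemma P_in: "to_nat (P z) \<in> carrier MM" by (rule MM_carrier) (simp add: okP_def)

lemma Mimg_P: assumes "z \<ge> 1" shows "Mimg MM (to_nat (P z)) = Mimg MM (to_nat (P 1))"
proof
  have "to_nat (P 1) \<in> Mimg MM (to_nat (P z))"
    unfolding Mimg_def
    by (rule image_eqI[of _ _ "to_nat (G 0)"]) (auto simp: Mel_def okG_def)
  then show "Mimg MM (to_nat (P 1)) \<subseteq> Mimg MM (to_nat (P z))"
    by (rule Mimg_sub[OF MM_monoid _ P_in])
  have "to_nat (P z) \<in> Mimg MM (to_nat (P 1))"
  proof (cases "z = 1")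
    case True then show ?thesis using Mimg_self[OF MM_monoid P_in] by simp
  next
    case False
    then show ?thesis unfolding Mimg_def
      by (rule_tac image_eqI[of _ _ "to_nat (A (z - 1))"]) (use assms in \<open>auto simp: Mel_def okA_def\<close>)
  qed
  then show "Mimg MM (to_nat (P z)) \<subseteq> Mimg MM (to_nat (P 1))"
    by (rule Mimg_sub[OF MM_monoid _ P_in])
qed

lemma P0_notin: "to_nat (P 0) \<notin> Mimg MM (to_nat (P 1))"
proof
  assume "to_nat (P 0) \<in> Mimg MM (to_nat (P 1))"
  then obtain k where k: "okE 0 k" "to_nat (P 0) = to_nat (mul 0 k (P 1))"
    unfolding Mimg_def by (auto simp: Mel_def)
  then have "P 0 = mul 0 k (P 1)" by simp
  then show False using k(1) by (cases k) (auto simp: okA_def okG_def)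
qed

lemma L01: "Lclass MM (to_nat (P 0)) \<noteq> Lclass MM (to_nat (P 1))"
proof
  assume "Lclass MM (to_nat (P 0)) = Lclass MM (to_nat (P 1))"
  then have "Mimg MM (to_nat (P 0)) = Mimg MM (to_nat (P 1))"
    by (rule Lclass_eqD[OF MM_monoid P_in])
  then show False using P0_notin Mimg_self[OF MM_monoid P_in, of 0] by simp
qed

lemma A_in: "i \<ge> 1 \<Longrightarrow> to_nat (A i) \<in> carrier MM" by (rule MM_carrier) (simp add: okA_def)

lemma core:
  assumes act: "action_hom MM (Lclasses MM) (Lact MM) Ys b f"
    and ij: "1 \<le> i" "i < j"
    and eq: "f (Lclass MM (to_nat (A i))) = f (Lclass MM (to_nat (A j)))"
  shows "f (Lclass MM (to_nat (P 0))) = f (Lclass MM (to_nat (P 1)))"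
proof -
  have hom: "\<And>X m. X \<in> Lclasses MM \<Longrightarrow> m \<in> carrier MM \<Longrightarrow> f (Lact MM X m) = b (f X) m"
    using act unfolding action_hom_def by blast
  have Ai: "Lclass MM (to_nat (A i)) \<in> Lclasses MM" using A_in ij by (simp add: Lclasses_def)
  have Aj: "Lclass MM (to_nat (A j)) \<in> Lclasses MM" using A_in ij by (simp add: Lclasses_def)
  have 1: "Lact MM (Lclass MM (to_nat (A i))) (to_nat (P (- i))) = Lclass MM (to_nat (P 0))"
    using Lact_Lclass[OF MM_monoid A_in P_in, of i "- i"] ij by (simp add: Mel_def)
  have 2: "Lact MM (Lclass MM (to_nat (A j))) (to_nat (P (- i))) = Lclass MM (to_nat (P (j - i)))"
    using Lact_Lclass[OF MM_monoid A_in P_in, of j "- i"] ij by (simp add: Mel_def)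
  have 3: "Lclass MM (to_nat (P (j - i))) = Lclass MM (to_nat (P 1))"
    by (rule Lclass_eqI, rule Mimg_P) (use ij in simp)
  have "f (Lclass MM (to_nat (P 0))) = b (f (Lclass MM (to_nat (A i)))) (to_nat (P (- i)))"
    using hom[OF Ai P_in, of "- i"] 1 by simp
  also have "\<dots> = b (f (Lclass MM (to_nat (A j)))) (to_nat (P (- i)))" using eq by simp
  also have "\<dots> = f (Lclass MM (to_nat (P 1)))"
    using hom[OF Aj P_in, of "- i"] 2 3 by simp
  finally show ?thesis .
qed

lemma not_rf: "\<not> residually_finite_action MM (Lclasses MM) (Lact MM)"
proof
  assume "residually_finite_action MM (Lclasses MM) (Lact MM)"
  moreover have "Lclass MM (to_nat (P 0)) \<in> Lclasses MM" "Lclass MM (to_nat (P 1)) \<in> Lclasses MM"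
    using P_in by (auto simp: Lclasses_def)
  ultimately obtain Ys :: "nat set" and b f where
    fin: "finite Ys" and act: "action_hom MM (Lclasses MM) (Lact MM) Ys b f"
    and ne: "f (Lclass MM (to_nat (P 0))) \<noteq> f (Lclass MM (to_nat (P 1)))"
    using L01 unfolding residually_finite_action_def by blast
  define g where "g = (\<lambda>i::nat. f (Lclass MM (to_nat (A (int i)))))"
  have "g ` {1..} \<subseteq> Ys"
  proof
    fix y assume "y \<in> g ` {1..}"
    then obtain i :: nat where i: "i \<ge> 1" "y = g i" by auto
    have "Lclass MM (to_nat (A (int i))) \<in> Lclasses MM"
      unfolding Lclasses_def by (rule imageI, rule A_in) (use i in simp)
    then show "y \<in> Ys" using act i unfolding action_hom_def g_def by blast
  qed
  then have "finite (g ` {1..})" using fin by (rule finite_subset)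
  then have "\<not> inj_on g {1..}" using finite_imageD infinite_Ici by blast
  then obtain i j where ij: "i \<in> {1..}" "j \<in> {1..}" "i \<noteq> j" "g i = g j"
    unfolding inj_on_def by blast
  show False
  proof (cases "i < j")
    case True
    then show False using core[OF act, of "int i" "int j"] ij ne by (simp add: g_def)
  next
    case False
    then have "j < i" using ij by simp
    then show False using core[OF act, of "int j" "int i"] ij ne by (simp add: g_def)
  qed
qed

theorem mainTheorem6:
  shows "\<exists>M :: nat monoid. monoid M \<and> residually_finite_monoid M \<and>
           \<not> residually_finite_action M (Lclasses M) (Lact M)"
  using MM_monoid rf_main not_rf by blast

end
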